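(* Let $(G,k)$ be an instance of PITVD, let $S\subseteq V(G)$ be such that $G-S$ is a simple (prop-int, tree)-graph, let $V_1$ be the set of vertices of the connected components of $G-S$ that contain a cycle, and fix a clique partition $\mathcal{K}$ of $G[V_1]$ obtained from a proper interval ordering. Let $C$ be a connected component of $G[V_1]$ and $\mathcal{K}_C$ the set of cliques of $\mathcal{K}$ contained in $C$. If a vertex $v\in S$ is adjacent to a vertex of each of at least $6k+5$ distinct cliques of $\mathcal{K}_C$, then $(G,k)$ is a yes-instance of PITVD if and only if $(G-v,k-1)$ is a yes-instance of PITVD.
   Context: PITVD: the input is an undirected multigraph $G$ (no self-loops) and an integer $k$; the question is whether there exists $X\subseteq V(G)$ with $|X|\le k$ such that $G-X$ is a simple graph and every connected component of $G-X$ is a proper interval graph or a tree. A simple graph is a (prop-int, tree)-graph if each component is a proper interval graph or a tree. A proper interval graph has a representation by closed unit-length intervals $I_u=[\mathrm{lp}_u,\mathrm{rp}_u]$, adjacency meaning intersection; a proper interval ordering is an ordering $v_1,\dots,v_n$ of the vertices with $\mathrm{lp}_{v_1}<\dots<\mathrm{lp}_{v_n}$. The clique partition from such an ordering is built greedily: $K_1$ consists of $v_1$ and all vertices $v_i$ whose left endpoint lies in $I_{v_1}$ (a prefix $v_1,\dots,v_i$ of the ordering); remove $K_1$ and repeat on the remaining ordered vertices to get $K_2$, and so on, giving the sequence $\mathcal{K}=(K_1,\dots,K_t)$. *)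

theory Defs
  imports Complex_Main
begin

text \<open>A finite undirected multigraph without self-loops is a pair (V, m) of a vertex set V
and an edge-multiplicity function m (m u v = number of edges between u and v).\<close>

type_synonym 'a mgraph = "'a set \<times> ('a \<Rightarrow> 'a \<Rightarrow> nat)"

definition multigraph :: "'a mgraph \<Rightarrow> bool" where
  "multigraph G \<longleftrightarrow> finite (fst G) \<and> (\<forall>u v. snd G u v = snd G v u)
     \<and> (\<forall>v. snd G v v = 0) \<and> (\<forall>u v. 0 < snd G u v \<longrightarrow> u \<in> fst G \<and> v \<in> fst G)"

definition adj :: "'a mgraph \<Rightarrow> 'a \<Rightarrow> 'a \<Rightarrow> bool" where
  "adj G u v \<longleftrightarrow> 0 < snd G u v"

definition del_vs :: "'a mgraph \<Rightarrow> 'a set \<Rightarrow> 'a mgraph" where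
  "del_vs G X = (fst G - X, \<lambda>u v. if u \<in> X \<or> v \<in> X then 0 else snd G u v)"

definition induced :: "'a mgraph \<Rightarrow> 'a set \<Rightarrow> 'a mgraph" where
  "induced G W = del_vs G (fst G - W)"

definition simple_mg :: "'a mgraph \<Rightarrow> bool" where
  "simple_mg G \<longleftrightarrow> (\<forall>u v. snd G u v \<le> 1)"

definition reach_in :: "'a mgraph \<Rightarrow> 'a set \<Rightarrow> 'a \<Rightarrow> 'a \<Rightarrow> bool" where
  "reach_in G W = (\<lambda>x y. x \<in> W \<and> y \<in> W \<and> adj G x y)\<^sup>*\<^sup>*"

definition connected_in :: "'a mgraph \<Rightarrow> 'a set \<Rightarrow> bool" where
  "connected_in G W \<longleftrightarrow> W \<noteq> {} \<and> (\<forall>x\<in>W. \<forall>y\<in>W. reach_in G W x y)"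

definition components :: "'a mgraph \<Rightarrow> 'a set set" where
  "components G = {{y. reach_in G (fst G) x y} | x. x \<in> fst G}"

definition has_cycle_in :: "'a mgraph \<Rightarrow> 'a set \<Rightarrow> bool" where
  "has_cycle_in G W \<longleftrightarrow> (\<exists>xs. 3 \<le> length xs \<and> distinct xs \<and> set xs \<subseteq> W
      \<and> (\<forall>i. Suc i < length xs \<longrightarrow> adj G (xs ! i) (xs ! Suc i))
      \<and> adj G (last xs) (hd xs))"

definition is_tree_on :: "'a mgraph \<Rightarrow> 'a set \<Rightarrow> bool" where
  "is_tree_on G W \<longleftrightarrow> connected_in G W \<and> \<not> has_cycle_in G W"

text \<open>lp is a unit interval representation (intervals [lp u, lp u + 1]) of the subgraph
induced by W.\<close>
definition unit_interval_rep :: "'a mgraph \<Rightarrow> 'a set \<Rightarrow> ('a \<Rightarrow> real) \<Rightarrow> bool" where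
  "unit_interval_rep G W lp \<longleftrightarrow>
     (\<forall>u\<in>W. \<forall>w\<in>W. u \<noteq> w \<longrightarrow> (adj G u w \<longleftrightarrow> \<bar>lp u - lp w\<bar> \<le> 1))"

definition prop_int_on :: "'a mgraph \<Rightarrow> 'a set \<Rightarrow> bool" where
  "prop_int_on G W \<longleftrightarrow> (\<exists>lp. unit_interval_rep G W lp)"

definition pit_graph :: "'a mgraph \<Rightarrow> bool" where
  "pit_graph G \<longleftrightarrow> (\<forall>C\<in>components G. prop_int_on G C \<or> is_tree_on G C)"

definition pitvd_yes :: "'a mgraph \<Rightarrow> int \<Rightarrow> bool" where
  "pitvd_yes G k \<longleftrightarrow> (\<exists>X. X \<subseteq> fst G \<and> int (card X) \<le> k
      \<and> simple_mg (del_vs G X) \<and> pit_graph (del_vs G X))"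

text \<open>Greedy clique partition w.r.t. a proper interval ordering given by left endpoints lp.\<close>
inductive greedy_cp :: "('a \<Rightarrow> real) \<Rightarrow> 'a set \<Rightarrow> 'a set list \<Rightarrow> bool" for lp where
  Nil: "greedy_cp lp {} []"
| Cons: "v \<in> W \<Longrightarrow> (\<forall>u\<in>W. lp v \<le> lp u) \<Longrightarrow> K = {u \<in> W. lp v \<le> lp u \<and> lp u \<le> lp v + 1}
     \<Longrightarrow> greedy_cp lp (W - K) Ks \<Longrightarrow> greedy_cp lp W (K # Ks)"

end

theory Submission
  imports Defs
begin


lemma sorted_list_ex:
  assumes "finite A" "inj_on (f::'a \<Rightarrow> real) A"
  shows "\<exists>xs. set xs = A \<and> distinct xs \<and> (\<forall>i j. i < j \<longrightarrow> j < length xs \<longrightarrow> f (xs!i) < f (xs!j))"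
proof -
  obtain xs0 where "set xs0 = A" "distinct xs0" using finite_distinct_list[OF assms(1)] by blast
  define ys where "ys = sort_key f xs0"
  have s: "set ys = A" "distinct ys" using \<open>set xs0 = A\<close> \<open>distinct xs0\<close> by (auto simp: ys_def)
  have "sorted (map f ys)" by (simp add: ys_def)
  moreover have "distinct (map f ys)" using s assms(2) by (simp add: distinct_map)
  ultimately have "sorted_wrt (<) (map f ys)" by (simp add: strict_sorted_iff)
  then have "sorted_wrt (\<lambda>x y. f x < f y) ys" by (simp add: sorted_wrt_map)
  then show ?thesis using s by (auto simp: sorted_wrt_iff_nth_less)
qed

lemma rtranclp_cross:
  assumes "R\<^sup>*\<^sup>* a b" "P a" "\<not> P b"
  shows "\<exists>x y. R\<^sup>*\<^sup>* a x \<and> R x y \<and> P x \<and> \<not> P y"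
  using assms
proof (induction rule: rtranclp_induct)
  case base then show ?case by simp
next
  case (step b c)
  show ?case
  proof (cases "P b")
    case True then show ?thesis using step by blast
  next
    case False then obtain x y where "R\<^sup>*\<^sup>* a x \<and> R x y \<and> P x \<and> \<not> P y" using step by blast
    then show ?thesis by blast
  qed
qed

lemma rtranclp_sym:
  assumes "\<And>x y. R x y \<Longrightarrow> R y x" "R\<^sup>*\<^sup>* a b"
  shows "R\<^sup>*\<^sup>* b a"
  using assms(2)
proof (induction rule: rtranclp_induct)
  case base then show ?case by simp
next
  case (step b c)
  then show ?case using assms(1) by (meson converse_rtranclp_into_rtranclp)
qed

lemma adj_del: "adj (del_vs G X) u w \<longleftrightarrow> u \<notin> X \<and> w \<notin> X \<and> adj G u w"
  by (auto simp: adj_def del_vs_def)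

lemma fst_del[simp]: "fst (del_vs G X) = fst G - X"
  by (simp add: del_vs_def)

lemma adj_sym: "multigraph G \<Longrightarrow> adj G u w \<Longrightarrow> adj G w u"
  by (metis adj_def multigraph_def)

lemma adj_fst: "multigraph G \<Longrightarrow> adj G u w \<Longrightarrow> u \<in> fst G \<and> w \<in> fst G"
  by (metis adj_def multigraph_def)

lemma adj_irr: "multigraph G \<Longrightarrow> adj G u w \<Longrightarrow> u \<noteq> w"
  by (metis adj_def multigraph_def less_irrefl)

lemma multigraph_del: "multigraph G \<Longrightarrow> multigraph (del_vs G X)"
  by (auto simp: multigraph_def del_vs_def)



lemma gc_sub: "greedy_cp lp W Ks \<Longrightarrow> K \<in> set Ks \<Longrightarrow> K \<subseteq> W"
  by (induction rule: greedy_cp.induct) auto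

lemma gc_disj: "greedy_cp lp W Ks \<Longrightarrow> K1 \<in> set Ks \<Longrightarrow> K2 \<in> set Ks \<Longrightarrow> K1 \<noteq> K2 \<Longrightarrow> K1 \<inter> K2 = {}"
proof (induction arbitrary: K1 K2 rule: greedy_cp.induct)
  case Nil then show ?case by simp
next
  case (Cons v W K Ks)
  have "\<forall>K'\<in>set Ks. K' \<subseteq> W - K" using gc_sub[OF Cons.hyps(4)] by blast
  then show ?case using Cons by (metis Diff_disjoint disjoint_iff_not_equal inf_commute set_ConsD subset_iff)
qed

lemma gc_first:
  assumes "greedy_cp lp W Ks" "w \<in> W" "\<forall>x\<in>W. lp w \<le> lp x"
    "K1 \<in> set Ks" "K2 \<in> set Ks" "K1 \<noteq> K2" "u1 \<in> K1" "u2 \<in> K2"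
    "lp u1 \<le> lp w + 1" "lp u2 \<le> lp w + 1"
  shows False
  using assms(1)
proof cases
  case Nil then show ?thesis using assms by simp
next
  case (Cons v K Ks')
  have e: "lp v = lp w" using Cons assms(2,3) by force
  have sub: "\<forall>K'\<in>set Ks'. K' \<subseteq> W - K" using gc_sub[OF Cons(5)] by blast
  have "u1 \<in> W" "u2 \<in> W" using gc_sub[OF assms(1)] assms by auto
  then have "u1 \<in> K" "u2 \<in> K" using Cons(3,4) e assms(3,9,10) \<open>w\<in>W\<close> by auto
  then have "K1 = K" "K2 = K" using sub assms Cons(1) by auto
  then show False using assms(6) by simp
qed

lemma gc_triple:
  "greedy_cp lp W Ks \<Longrightarrow> K1 \<in> set Ks \<Longrightarrow> K2 \<in> set Ks \<Longrightarrow> K3 \<in> set Ks \<Longrightarrow>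
   K1 \<noteq> K2 \<Longrightarrow> K1 \<noteq> K3 \<Longrightarrow> K2 \<noteq> K3 \<Longrightarrow> u1 \<in> K1 \<Longrightarrow> u2 \<in> K2 \<Longrightarrow> u3 \<in> K3 \<Longrightarrow>
   \<bar>lp u1 - lp u2\<bar> \<le> 1 \<Longrightarrow> \<bar>lp u1 - lp u3\<bar> \<le> 1 \<Longrightarrow> \<bar>lp u2 - lp u3\<bar> \<le> 1 \<Longrightarrow> False"
proof (induction arbitrary: K1 K2 K3 u1 u2 u3 rule: greedy_cp.induct)
  case Nil then show ?case by simp
next
  case (Cons v W K Ks)
  have sub: "\<forall>K'\<in>set Ks. K' \<subseteq> W - K" using gc_sub[OF Cons.hyps(4)] by blast
  have key: False if kk: "u \<in> K" "K2' \<in> set Ks" "K3' \<in> set Ks" "K2' \<noteq> K3'" "u2' \<in> K2'" "u3' \<in> K3'"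
      "\<bar>lp u - lp u2'\<bar> \<le> 1" "\<bar>lp u - lp u3'\<bar> \<le> 1" for u K2' K3' u2' u3'
  proof -
    from Cons.hyps(4) obtain w K' Ks' where
      g: "Ks = K' # Ks'" "w \<in> W - K" "\<forall>x\<in>W - K. lp w \<le> lp x"
      using kk(2) by cases auto
    have "lp w > lp v + 1" using g(2) Cons.hyps(1,2,3) by auto
    moreover have "lp u \<le> lp v + 1" using kk(1) Cons.hyps(3) by auto
    ultimately have "lp u2' \<le> lp w + 1" "lp u3' \<le> lp w + 1" using kk(7,8) by auto
    then show False using gc_first[OF Cons.hyps(4) g(2) g(3) kk(2,3,4,5,6)] by blast
  qed
  show ?case
  proof (cases "K1 = K \<or> K2 = K \<or> K3 = K")
    case True
    then show ?thesis
    proof (elim disjE)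
      assume "K1 = K"
      then show False using key[of u1 K2 K3 u2 u3] Cons.prems by auto
    next
      assume "K2 = K"
      then show False using key[of u2 K1 K3 u1 u3] Cons.prems by (auto simp: abs_minus_commute)
    next
      assume "K3 = K"
      then show False using key[of u3 K1 K2 u1 u2] Cons.prems by (auto simp: abs_minus_commute)
    qed
  next
    case False
    then show ?thesis using Cons.IH[of K1 K2 K3 u1 u2 u3] Cons.prems by auto
  qed
qed



lemma core:
  fixes lp :: "'a \<Rightarrow> real"
  assumes mg: "multigraph G"
    and X: "X \<subseteq> fst G" "card X \<le> n"
    and v: "v \<in> fst G" "v \<notin> X" "v \<notin> C"
    and Cs: "C \<subseteq> fst G"
    and inj: "inj_on lp C"
    and rep: "\<forall>u\<in>C. \<forall>w\<in>C. u \<noteq> w \<longrightarrow> (adj G u w \<longleftrightarrow> \<bar>lp u - lp w\<bar> \<le> 1)"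
    and cut: "\<forall>P. (\<exists>y\<in>C. P y) \<longrightarrow> (\<exists>y\<in>C. \<not> P y) \<longrightarrow> (\<exists>x\<in>C. \<exists>y\<in>C. P x \<and> \<not> P y \<and> adj G x y)"
    and N: "N \<subseteq> C" "\<forall>u\<in>N. adj G v u" "5 * (n + 1) \<le> card N"
    and tri: "\<forall>u1\<in>N. \<forall>u2\<in>N. \<forall>u3\<in>N. u1 \<noteq> u2 \<longrightarrow> u1 \<noteq> u3 \<longrightarrow> u2 \<noteq> u3 \<longrightarrow>
        \<bar>lp u1 - lp u2\<bar> \<le> 1 \<longrightarrow> \<bar>lp u1 - lp u3\<bar> \<le> 1 \<longrightarrow> \<bar>lp u2 - lp u3\<bar> \<le> 1 \<longrightarrow> False"
  shows "\<not> pit_graph (del_vs G X)"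
proof -
  have finG: "finite (fst G)" using mg by (simp add: multigraph_def)
  have finC: "finite C" using Cs finG finite_subset by blast
  have finN: "finite N" using N(1) finC finite_subset by blast
  have finX: "finite X" using X(1) finG finite_subset by blast
  have injN: "inj_on lp N" using inj N(1) inj_on_subset by blast
  obtain zs where zs: "set zs = N" "distinct zs"
    and srt: "\<forall>i j. i < j \<longrightarrow> j < length zs \<longrightarrow> lp (zs!i) < lp (zs!j)"
    using sorted_list_ex[OF finN injN] by blast
  have lenz: "length zs = card N" using zs distinct_card by metis
  have gap: "lp (zs!(j+2)) - lp (zs!j) > 1" if "j + 2 < length zs" for j
  proof (rule ccontr)
    assume nn: "\<not> lp (zs!(j+2)) - lp (zs!j) > 1"
    have o: "lp (zs!j) < lp (zs!(j+1))" "lp (zs!(j+1)) < lp (zs!(j+2))"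
      using srt that by auto
    have mem: "zs!j \<in> N" "zs!(j+1) \<in> N" "zs!(j+2) \<in> N" using that zs(1) nth_mem by fastforce+
    have d: "zs!j \<noteq> zs!(j+1)" "zs!j \<noteq> zs!(j+2)" "zs!(j+1) \<noteq> zs!(j+2)" using o by auto
    show False using tri mem d o nn by (smt (verit))
  qed
  define Wd where "Wd t = {u\<in>C. lp (zs!(5*t)) \<le> lp u \<and> lp u \<le> lp (zs!(5*t+4))}" for t
  have "\<exists>t\<le>n. Wd t \<inter> X = {}"
  proof (rule ccontr)
    assume "\<not> ?thesis"
    then have "\<forall>t\<in>{..n}. \<exists>x. x \<in> Wd t \<inter> X" by auto
    then obtain f where f: "\<forall>t\<in>{..n}. f t \<in> Wd t \<inter> X" by metis
    have "inj_on f {..n}"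
    proof (rule inj_onI)
      fix t t' assume tt: "t \<in> {..n}" "t' \<in> {..n}" "f t = f t'"
      show "t = t'"
      proof (rule ccontr)
        assume "t \<noteq> t'"
        have less: "lp (f s) < lp (f s')" if "s \<in> {..n}" "s' \<in> {..n}" "s < s'" for s s'
        proof -
          have b: "5*s'+4 < length zs" using that N(3) lenz by auto
          have "lp (f s) \<le> lp (zs!(5*s+4))" using f that(1) by (auto simp: Wd_def)
          also have "\<dots> < lp (zs!(5*s'))" using srt b that(3) by auto
          also have "\<dots> \<le> lp (f s')" using f that(2) by (auto simp: Wd_def)
          finally show ?thesis .
        qed
        show False using less[of t t'] less[of t' t] tt \<open>t \<noteq> t'\<close> by (cases "t < t'") auto
      qed
    qed
    moreover have "f ` {..n} \<subseteq> X" using f by auto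
    ultimately have "card {..n} \<le> card X" using card_inj_on_le finX by blast
    then show False using X(2) by simp
  qed
  then obtain t where t: "t \<le> n" "Wd t \<inter> X = {}" by blast
  define a where "a = zs!(5*t)"
  define b where "b = zs!(5*t+2)"
  define c where "c = zs!(5*t+4)"
  define T where "T = Wd t"
  have bt: "5*t+4 < length zs" using t N(3) lenz by auto
  have abcN: "a \<in> N" "b \<in> N" "c \<in> N" unfolding a_def b_def c_def
    by (metis bt zs(1) nth_mem add_lessD1 less_trans add_less_mono1 le_add1 nat_add_left_cancel_less, 
      rule nth_mem[of "5*t+2" zs, simplified zs(1)], use bt in linarith, use bt zs(1) nth_mem in blast)
  have g1: "lp b - lp a > 1" using gap[of "5*t"] bt unfolding a_def b_def by auto
  have e4: "5*t+2+2 = 5*t+4" by simp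
  have g2: "lp c - lp b > 1" using gap[of "5*t+2", unfolded e4] bt unfolding c_def b_def
    by simp
  have abcC: "a \<in> C" "b \<in> C" "c \<in> C" using abcN N(1) by auto
  have abcT: "a \<in> T" "b \<in> T" "c \<in> T" using abcC g1 g2 unfolding T_def Wd_def a_def b_def c_def
    by auto
  have TC: "T \<subseteq> C" by (auto simp: T_def Wd_def)
  have Tlp: "\<And>u. u \<in> T \<longleftrightarrow> u \<in> C \<and> lp a \<le> lp u \<and> lp u \<le> lp c"
    by (auto simp: T_def Wd_def a_def c_def)
  have TX: "T \<inter> X = {}" using t by (simp add: T_def)
  have finT: "finite T" using TC finC finite_subset by blast
  have injT: "inj_on lp T" using inj TC inj_on_subset by blast
  obtain ys where ys: "set ys = T" "distinct ys"
    and ysrt: "\<forall>i j. i < j \<longrightarrow> j < length ys \<longrightarrow> lp (ys!i) < lp (ys!j)"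
    using sorted_list_ex[OF finT injT] by blast
  have ysle: "lp (ys!i) \<le> lp (ys!j)" if "i \<le> j" "j < length ys" for i j
    using ysrt that by (cases "i = j") (auto intro: less_imp_le)
  have ysne: "ys \<noteq> []" using ys abcT by auto
  have hd: "ys!0 = a"
  proof -
    obtain j where j: "j < length ys" "ys!j = a" using abcT ys(1) by (metis in_set_conv_nth)
    have "ys!0 \<in> T" using ys ysne nth_mem by blast
    then have "lp a \<le> lp (ys!0)" using Tlp by auto
    then show ?thesis using j ysrt by (metis bot_nat_0.not_eq_extremum linorder_not_less)
  qed
  have lst: "ys!(length ys - 1) = c"
  proof -
    obtain j where j: "j < length ys" "ys!j = c" using abcT ys(1) by (metis in_set_conv_nth)
    have "ys!(length ys - 1) \<in> T" using ys ysne nth_mem by (metis diff_less length_greater_0_conv zero_less_one)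
    then have "lp (ys!(length ys - 1)) \<le> lp c" using Tlp by auto
    moreover have "j \<le> length ys - 1" using j by auto
    ultimately show ?thesis using j ysrt
      by (metis diff_less le_neq_implies_less length_greater_0_conv linorder_not_less ysne zero_less_one)
  qed
  have ysT: "ys!i \<in> T" if "i < length ys" for i using ys that nth_mem by blast
  have cons: "adj G (ys!i) (ys!Suc i)" if i: "Suc i < length ys" for i
  proof -
    define p where "p = ys!i"
    define q where "q = ys!Suc i"
    have pq: "lp p < lp q" using ysrt i unfolding p_def q_def by auto
    have pT: "p \<in> T" "q \<in> T" using ysT i unfolding p_def q_def by auto
    have "\<bar>lp p - lp q\<bar> \<le> 1"
    proof (rule ccontr)
      assume far: "\<not> ?thesis"
      have "\<exists>x\<in>C. \<exists>y\<in>C. lp x \<le> lp p \<and> \<not> lp y \<le> lp p \<and> adj G x y"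
        using cut[rule_format, of "\<lambda>u. lp u \<le> lp p"] pT TC pq by force
      then obtain x y where xy: "x \<in> C" "y \<in> C" "lp x \<le> lp p" "lp y > lp p" "adj G x y" by auto
      have "x \<noteq> y" using adj_irr[OF mg xy(5)] .
      then have xy1: "\<bar>lp x - lp y\<bar> \<le> 1" using rep xy by auto
      show False
      proof (cases "lp y < lp q")
        case True
        then have "y \<in> T" using Tlp xy pT by force
        then obtain j where j: "j < length ys" "ys!j = y" using ys(1) by (metis in_set_conv_nth)
        have "i < j"
        proof (rule ccontr)
          assume "\<not> i < j"
          then have "lp y \<le> lp p" using ysle[of j i] j i unfolding p_def by auto
          then show False using xy by auto
        qed
        moreover have "j < Suc i"
        proof (rule ccontr)
          assume "\<not> j < Suc i"
          then have "lp q \<le> lp y" using ysle[of "Suc i" j] j i unfolding q_def by auto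
          then show False using True by auto
        qed
        ultimately show False by auto
      next
        case False
        then show False using xy xy1 far pq by auto
      qed
    qed
    moreover have "p \<noteq> q" using pq by auto
    ultimately show ?thesis using rep pT TC unfolding p_def q_def by auto
  qed
  define R where "R = (\<lambda>x y. x \<in> fst G - X \<and> y \<in> fst G - X \<and> adj (del_vs G X) x y)"
  define D where "D = {y. reach_in (del_vs G X) (fst (del_vs G X)) v y}"
  have Dcomp: "D \<in> components (del_vs G X)" unfolding D_def components_def using v by auto
  have reachD: "y \<in> D \<longleftrightarrow> R\<^sup>*\<^sup>* v y" for y by (simp add: D_def R_def reach_in_def)
  have ysfst: "ys!i \<in> fst G - X" if "i < length ys" for i
    using ysT[OF that] TX TC Cs by auto
  have vfst: "v \<in> fst G - X" using v by auto
  have adjd: "adj (del_vs G X) x y" if "x \<in> fst G - X" "y \<in> fst G - X" "adj G x y" for x y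
    using that by (simp add: adj_del)
  have ysD: "ys!i \<in> D" if "i < length ys" for i
    using that
  proof (induction i)
    case 0
    have "R v (ys!0)" unfolding R_def using vfst ysfst[OF 0] adjd hd N(2) abcN by auto
    then show ?case using reachD by auto
  next
    case (Suc i)
    have "R (ys!i) (ys!Suc i)" unfolding R_def using ysfst Suc.prems cons[OF Suc.prems] adjd by auto
    then show ?case using reachD Suc by (meson Suc_lessD rtranclp.rtrancl_into_rtrancl)
  qed
  have vD: "v \<in> D" using reachD by auto
  have abcD: "a \<in> D" "b \<in> D" "c \<in> D" using abcT ys(1) ysD by (metis in_set_conv_nth)+
  have abcX: "a \<in> fst G - X" "b \<in> fst G - X" "c \<in> fst G - X" using abcT TX TC Cs by auto
  have nadj: "\<not> adj (del_vs G X) x y" if "x \<in> C" "y \<in> C" "\<bar>lp x - lp y\<bar> > 1" for x y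
  proof -
    have "x \<noteq> y" using that by auto
    then show ?thesis using rep that by (auto simp: adj_del)
  qed
  have vadj: "adj (del_vs G X) v x" if "x \<in> N" "x \<in> fst G - X" for x
    using adjd vfst that N(2) by auto
  have npi: "\<not> prop_int_on (del_vs G X) D"
  proof
    assume "prop_int_on (del_vs G X) D"
    then obtain l where l: "unit_interval_rep (del_vs G X) D l" by (auto simp: prop_int_on_def)
    have vn: "v \<noteq> a" "v \<noteq> b" "v \<noteq> c" using v abcC by auto
    have ab: "a \<noteq> b" "a \<noteq> c" "b \<noteq> c" using g1 g2 by auto
    have "\<bar>l v - l a\<bar> \<le> 1" "\<bar>l v - l b\<bar> \<le> 1" "\<bar>l v - l c\<bar> \<le> 1"
      using l vD abcD vn vadj abcN abcX unfolding unit_interval_rep_def by blast+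
    moreover have "\<bar>l a - l b\<bar> > 1" "\<bar>l a - l c\<bar> > 1" "\<bar>l b - l c\<bar> > 1"
      using l abcD ab nadj abcC g1 g2 unfolding unit_interval_rep_def
      by (smt (verit))+
    ultimately show False by linarith
  qed
  have cyc: "has_cycle_in (del_vs G X) D"
    unfolding has_cycle_in_def
  proof (intro exI conjI allI impI)
    have "a \<noteq> b" "a \<noteq> c" "b \<noteq> c" using g1 g2 by auto
    then have "card {a, b, c} = 3" by simp
    moreover have "{a,b,c} \<subseteq> set ys" using abcT ys by auto
    ultimately have "3 \<le> card (set ys)" by (metis List.finite_set card_mono)
    then show "3 \<le> length (v # ys)" using card_length[of ys] by simp
    show "distinct (v # ys)" using ys v TC by auto
    show "set (v # ys) \<subseteq> D" using vD ysD by (auto simp: in_set_conv_nth)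
    fix i assume i: "Suc i < length (v # ys)"
    show "adj (del_vs G X) ((v # ys) ! i) ((v # ys) ! Suc i)"
    proof (cases i)
      case 0 then show ?thesis using hd vadj abcN abcX by simp
    next
      case (Suc j)
      then show ?thesis using i cons ysfst adjd by auto
    qed
  next
    have "last (v # ys) = c" using lst ysne by (simp add: last_conv_nth)
    then show "adj (del_vs G X) (last (v # ys)) (hd (v # ys))"
      using vadj[OF abcN(3) abcX(3)] adj_sym[OF multigraph_del[OF mg]] by simp
  qed
  show ?thesis using npi cyc Dcomp unfolding pit_graph_def is_tree_on_def by blast
qed



lemma del_del: "del_vs (del_vs G A) B = del_vs G (A \<union> B)"
  unfolding del_vs_def by (auto intro!: ext)

lemma comp_sub: "D \<in> components H \<Longrightarrow> D \<subseteq> fst H"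
proof
  fix y assume "D \<in> components H" "y \<in> D"
  then obtain x where x: "x \<in> fst H" "reach_in H (fst H) x y" by (auto simp: components_def)
  show "y \<in> fst H" using x(2) unfolding reach_in_def
    by (induction rule: rtranclp_induct) (use x(1) in auto)
qed

lemma comp_reach:
  assumes "multigraph H" "D \<in> components H" "y1 \<in> D" "y2 \<in> D"
  shows "reach_in H (fst H) y1 y2"
proof -
  obtain x where x: "D = {y. reach_in H (fst H) x y}" using assms(2) by (auto simp: components_def)
  define R where "R = (\<lambda>x y. x \<in> fst H \<and> y \<in> fst H \<and> adj H x y)"
  have sym: "\<And>a b. R a b \<Longrightarrow> R b a"
    using adj_sym[OF assms(1)] unfolding R_def by blast
  have "R\<^sup>*\<^sup>* x y1" using assms(3) x unfolding reach_in_def R_def by blast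
  then have "R\<^sup>*\<^sup>* y1 x" using rtranclp_sym[of R, OF sym] by blast
  then have "reach_in H (fst H) y1 x" unfolding reach_in_def R_def .
  then show ?thesis using assms(4) x unfolding reach_in_def by auto
qed

lemma comp_closed:
  assumes "D \<in> components H" "y1 \<in> D" "reach_in H (fst H) y1 y"
  shows "y \<in> D"
proof -
  obtain x where x: "D = {y. reach_in H (fst H) x y}" using assms(1) by (auto simp: components_def)
  then show ?thesis using assms unfolding reach_in_def by auto
qed

theorem lemma34:
  fixes G :: "'a mgraph" and k :: int and S V1 C :: "'a set" and v :: 'a
    and lp :: "'a \<Rightarrow> real" and Ks :: "'a set list"
  assumes "multigraph G" and "0 \<le> k"
    and "S \<subseteq> fst G"
    and "simple_mg (del_vs G S)" and "pit_graph (del_vs G S)"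
    and "V1 = \<Union>{D \<in> components (del_vs G S). has_cycle_in (del_vs G S) D}"
    and "unit_interval_rep (induced G V1) V1 lp" and "inj_on lp V1"
    and "greedy_cp lp V1 Ks"
    and "C \<in> components (induced G V1)"
    and "v \<in> S"
    and "6 * k + 5 \<le> int (card {K \<in> set Ks. K \<subseteq> C \<and> (\<exists>u\<in>K. adj G v u)})"
  shows "pitvd_yes G k \<longleftrightarrow> pitvd_yes (del_vs G {v}) (k - 1)"
proof
  have finG: "finite (fst G)" using assms(1) by (simp add: multigraph_def)
  assume "pitvd_yes G k"
  then obtain X where X: "X \<subseteq> fst G" "int (card X) \<le> k" "simple_mg (del_vs G X)" "pit_graph (del_vs G X)"
    by (auto simp: pitvd_yes_def)
  have finX: "finite X" using X(1) finG finite_subset by blast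
  show "pitvd_yes (del_vs G {v}) (k - 1)"
  proof (cases "v \<in> X")
    case True
    have e: "del_vs (del_vs G {v}) (X - {v}) = del_vs G X" using True by (simp add: del_del insert_absorb)
    have "card (X - {v}) = card X - 1" using True finX by simp
    moreover have "card X \<ge> 1" using True finX by (metis One_nat_def Suc_leI card_gt_0_iff empty_iff)
    ultimately have "int (card (X - {v})) \<le> k - 1" using X(2) by linarith
    then show ?thesis unfolding pitvd_yes_def using e X True by (intro exI[of _ "X - {v}"]) auto
  next
    case False
    define H where "H = induced G V1"
    have mgH: "multigraph H" unfolding H_def induced_def using multigraph_del[OF assms(1)] .
    have fH: "fst H = fst G \<inter> V1" by (auto simp: H_def induced_def)
    have CH: "C \<subseteq> fst G \<inter> V1" using comp_sub[OF assms(10)] fH H_def by auto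
    have V1S: "V1 \<subseteq> fst G - S" using assms(6) comp_sub[of _ "del_vs G S"] by auto
    have vC: "v \<notin> C" using CH V1S assms(11) by auto
    have adjH: "adj H u w \<longleftrightarrow> adj G u w" if "u \<in> V1" "w \<in> V1" for u w
      using that by (simp add: H_def induced_def adj_del)
    have rep0: "\<forall>u\<in>V1. \<forall>w\<in>V1. u \<noteq> w \<longrightarrow> (adj H u w \<longleftrightarrow> \<bar>lp u - lp w\<bar> \<le> 1)"
      using assms(7) unfolding unit_interval_rep_def H_def by simp
    have rep: "\<forall>u\<in>C. \<forall>w\<in>C. u \<noteq> w \<longrightarrow> (adj G u w \<longleftrightarrow> \<bar>lp u - lp w\<bar> \<le> 1)"
    proof (intro ballI impI)
      fix u w assume uw: "u \<in> C" "w \<in> C" "u \<noteq> w"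
      then have "u \<in> V1" "w \<in> V1" using CH by auto
      then show "adj G u w \<longleftrightarrow> \<bar>lp u - lp w\<bar> \<le> 1" using rep0[rule_format, of u w] adjH uw(3) by simp
    qed
    have cut: "\<forall>P. (\<exists>y\<in>C. P y) \<longrightarrow> (\<exists>y\<in>C. \<not> P y) \<longrightarrow> (\<exists>x\<in>C. \<exists>y\<in>C. P x \<and> \<not> P y \<and> adj G x y)"
    proof (intro allI impI)
      fix P assume "\<exists>y\<in>C. P y" "\<exists>y\<in>C. \<not> P y"
      then obtain y1 y2 where y: "y1 \<in> C" "P y1" "y2 \<in> C" "\<not> P y2" by blast
      have "reach_in H (fst H) y1 y2" using comp_reach[OF mgH] assms(10) y H_def by blast
      then obtain x y where xy: "reach_in H (fst H) y1 x" "x \<in> fst H" "y \<in> fst H" "adj H x y" "P x" "\<not> P y"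
        using rtranclp_cross[of _ y1 y2 P] y unfolding reach_in_def by blast
      have "x \<in> C" using comp_closed[of C H] assms(10) H_def xy y by blast
      moreover have "reach_in H (fst H) y1 y" using xy unfolding reach_in_def
        by (simp add: rtranclp.rtrancl_into_rtrancl)
      then have "y \<in> C" using comp_closed[of C H] assms(10) H_def y by blast
      moreover have "adj G x y" using xy adjH fH by auto
      ultimately show "\<exists>x\<in>C. \<exists>y\<in>C. P x \<and> \<not> P y \<and> adj G x y" using xy by blast
    qed
    define A where "A = {K \<in> set Ks. K \<subseteq> C \<and> (\<exists>u\<in>K. adj G v u)}"
    define nf where "nf K = (SOME u. u \<in> K \<and> adj G v u)" for K
    have nf: "nf K \<in> K \<and> adj G v (nf K)" if "K \<in> A" for K
      using that unfolding A_def nf_def by (metis (mono_tags, lifting) mem_Collect_eq someI_ex)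
    define N where "N = nf ` A"
    have injn: "inj_on nf A"
    proof (rule inj_onI)
      fix K1 K2 assume "K1 \<in> A" "K2 \<in> A" "nf K1 = nf K2"
      show "K1 = K2"
      proof (rule ccontr)
        assume ne: "K1 \<noteq> K2"
        have "K1 \<in> set Ks" "K2 \<in> set Ks" using \<open>K1 \<in> A\<close> \<open>K2 \<in> A\<close> unfolding A_def by auto
        then have "K1 \<inter> K2 = {}" using gc_disj[OF assms(9) _ _ ne] by blast
        moreover have "nf K1 \<in> K1" "nf K2 \<in> K2" using nf \<open>K1 \<in> A\<close> \<open>K2 \<in> A\<close> by auto
        ultimately show False using \<open>nf K1 = nf K2\<close> by auto
      qed
    qed
    have finA: "finite A" unfolding A_def by simp
    have cardN: "card N = card A" unfolding N_def using card_image[OF injn] .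
    have NC: "N \<subseteq> C" using nf unfolding N_def A_def by auto
    have Nadj: "\<forall>u\<in>N. adj G v u" using nf unfolding N_def by auto
    have c6: "6*k+5 \<le> int (card N)" using assms(12) cardN unfolding A_def by simp
    have "int (5 * (nat k + 1)) \<le> int (card N)" using c6 assms(2) by simp
    then have N5: "5 * (nat k + 1) \<le> card N" by (simp only: of_nat_le_iff)
    have tri: "\<forall>u1\<in>N. \<forall>u2\<in>N. \<forall>u3\<in>N. u1 \<noteq> u2 \<longrightarrow> u1 \<noteq> u3 \<longrightarrow> u2 \<noteq> u3 \<longrightarrow>
        \<bar>lp u1 - lp u2\<bar> \<le> 1 \<longrightarrow> \<bar>lp u1 - lp u3\<bar> \<le> 1 \<longrightarrow> \<bar>lp u2 - lp u3\<bar> \<le> 1 \<longrightarrow> False"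
    proof (intro ballI impI)
      fix u1 u2 u3 assume u: "u1 \<in> N" "u2 \<in> N" "u3 \<in> N" "u1 \<noteq> u2" "u1 \<noteq> u3" "u2 \<noteq> u3"
        "\<bar>lp u1 - lp u2\<bar> \<le> 1" "\<bar>lp u1 - lp u3\<bar> \<le> 1" "\<bar>lp u2 - lp u3\<bar> \<le> 1"
      obtain K1 K2 K3 where K: "K1 \<in> A" "K2 \<in> A" "K3 \<in> A" "u1 = nf K1" "u2 = nf K2" "u3 = nf K3"
        using u(1-3) unfolding N_def by blast
      have Ks: "K1 \<in> set Ks" "K2 \<in> set Ks" "K3 \<in> set Ks" using K unfolding A_def by auto
      have ne: "K1 \<noteq> K2" "K1 \<noteq> K3" "K2 \<noteq> K3" using K u by auto
      have mem: "u1 \<in> K1" "u2 \<in> K2" "u3 \<in> K3" using K nf by auto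
      show False using gc_triple[OF assms(9) Ks ne mem u(7-9)] .
    qed
    have "\<not> pit_graph (del_vs G X)"
    proof (rule core[OF assms(1) X(1) _ _ False vC _ _ rep cut NC Nadj N5 tri])
      show "card X \<le> nat k" using X(2) by linarith
      show "v \<in> fst G" using assms(3,11) by auto
      show "C \<subseteq> fst G" using CH by auto
      show "inj_on lp C" using assms(8) CH inj_on_subset by blast
    qed
    then show ?thesis using X(4) by simp
  qed
next
  have finG: "finite (fst G)" using assms(1) by (simp add: multigraph_def)
  assume "pitvd_yes (del_vs G {v}) (k - 1)"
  then obtain X where X: "X \<subseteq> fst G - {v}" "int (card X) \<le> k - 1"
    "simple_mg (del_vs G ({v} \<union> X))" "pit_graph (del_vs G ({v} \<union> X))"
    by (auto simp: pitvd_yes_def del_del)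
  have finX: "finite X" using X(1) finG finite_subset by blast
  have "v \<notin> X" using X(1) by auto
  then have "card (insert v X) = card X + 1" using finX by simp
  moreover have "v \<in> fst G" using assms(3,11) by auto
  ultimately show "pitvd_yes G k" unfolding pitvd_yes_def using X
    by (intro exI[of _ "insert v X"]) auto
qed

end
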